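(* Let $p$ be an odd prime, let $n\ge 1$ and $0\le k\le n$, and let $\mathcal S\subseteq \mathbb Z_p^{2n}$ be an isotropic subspace of dimension $n-k$. Let $\hat\rho$ be any single-qudit density matrix on $\mathbb C^p$. Then the probability of successfully projecting $\hat\rho^{\otimes n}$ onto the trivial-syndrome codespace of $\mathcal S$ equals the complete weight enumerator of $\mathcal S^\perp$ evaluated at the entries of the Wigner function of $\hat\rho$: $$\operatorname{tr}\!\left(\hat\Pi^0_{\mathcal S}\,\hat\rho^{\otimes n}\right)=w\big(\mathcal S^\perp;\{W(\hat\rho;i,j)\}\big)=\sum_{(\vec u|\vec v)\in\mathcal S^\perp}\ \prod_{i=1}^n W(\hat\rho;u_i,v_i).$$
   Context: Let $p$ be an odd prime, $\omega=e^{2\pi i/p}$, and $2^{-1}$ the inverse of $2$ in $\mathbb Z_p$. On $\mathbb C^p$ with basis $\{|k\rangle\}_{k\in\mathbb Z_p}$ let $\hat X=\sum_k|k+1\rangle\langle k|$, $\hat Z=\sum_k\omega^k|k\rangle\langle k|$, and $\hat D(u,v)=\omega^{-2^{-1}uv}\hat X^u\hat Z^v$ for $u,v\in\mathbb Z_p$. For $\chi=(\vec u|\vec v)\in\mathbb Z_p^{2n}$ (with $\vec u,\vec v\in\mathbb Z_p^n$) let $\hat D(\chi)=\hat D(u_1,v_1)\otimes\cdots\otimes\hat D(u_n,v_n)$. The symplectic form is $[\chi,\chi']=\vec u\cdot\vec v'-\vec u'\cdot\vec v$. A subspace $\mathcal S\subseteq\mathbb Z_p^{2n}$ is isotropic if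 $[\chi,\chi']=0$ for all $\chi,\chi'\in\mathcal S$; it is identified with the stabilizer group $\{\hat D(\chi):\chi\in\mathcal S\}$. Define $\mathcal S^\perp=\{\chi\in\mathbb Z_p^{2n}:[\chi,\sigma]=0\ \forall\sigma\in\mathcal S\}$, and the trivial-syndrome projector $\hat\Pi^0_{\mathcal S}=p^{-(n-k)}\sum_{\chi\in\mathcal S}\hat D(\chi)$. Phase point operators: $\hat A(0,0)=p^{-1}\sum_{u,v\in\mathbb Z_p}\hat D(u,v)$, $\hat A(u,v)=\hat D(u,v)\hat A(0,0)\hat D(u,v)^\dagger$. The discrete Wigner function of a single-qudit state is $W(\hat\rho;u,v)=p^{-1}\operatorname{tr}(\hat\rho\hat A(u,v))$. For a subset $T\subseteq\mathbb Z_p^{2n}$ and numbers $\{y_{ij}\}_{i,j\in\mathbb Z_p}$, the complete weight enumerator is $w(T;\{y_{ij}\})=\sum_{(\vec u|\vec v)\in T}\prod_{i=1}^n y_{u_i,v_i}$. *)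

theory Defs
  imports Complex_Main "HOL-Computational_Algebra.Primes"
begin

text \<open>Elements of Z_p are represented by naturals in {0..<p}. A vector
chi = (u|v) in Z_p^{2n} is a list of length 2n whose first n entries are u
and last n entries are v.\<close>

definition zvecs :: "nat \<Rightarrow> nat \<Rightarrow> nat list set" where
  "zvecs p m = {x. length x = m \<and> set x \<subseteq> {..<p}}"

definition zadd :: "nat \<Rightarrow> nat list \<Rightarrow> nat list \<Rightarrow> nat list" where
  "zadd p x y = map2 (\<lambda>a b. (a + b) mod p) x y"

definition zscale :: "nat \<Rightarrow> nat \<Rightarrow> nat list \<Rightarrow> nat list" where
  "zscale p c x = map (\<lambda>a. (c * a) mod p) x"

definition zsubspace :: "nat \<Rightarrow> nat \<Rightarrow> nat list set \<Rightarrow> bool" where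
  "zsubspace p m S \<longleftrightarrow> S \<subseteq> zvecs p m \<and> replicate m 0 \<in> S \<and>
     (\<forall>x\<in>S. \<forall>y\<in>S. zadd p x y \<in> S) \<and> (\<forall>c<p. \<forall>x\<in>S. zscale p c x \<in> S)"

definition zlincomb :: "nat \<Rightarrow> nat \<Rightarrow> (nat \<Rightarrow> nat) \<Rightarrow> nat list list \<Rightarrow> nat list" where
  "zlincomb p m c bs = map (\<lambda>i. (\<Sum>j<length bs. c j * (bs ! j ! i)) mod p) [0..<m]"

definition zlin_indep :: "nat \<Rightarrow> nat \<Rightarrow> nat list list \<Rightarrow> bool" where
  "zlin_indep p m bs \<longleftrightarrow> (\<forall>c. (\<forall>j<length bs. c j < p) \<longrightarrow>
      zlincomb p m c bs = replicate m 0 \<longrightarrow> (\<forall>j<length bs. c j = 0))"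

definition zspan :: "nat \<Rightarrow> nat \<Rightarrow> nat list list \<Rightarrow> nat list set" where
  "zspan p m bs = {zlincomb p m c bs | c. \<forall>j<length bs. c j < p}"

definition zdim_eq :: "nat \<Rightarrow> nat \<Rightarrow> nat list set \<Rightarrow> nat \<Rightarrow> bool" where
  "zdim_eq p m S d \<longleftrightarrow> (\<exists>bs. length bs = d \<and> set bs \<subseteq> S \<and> zlin_indep p m bs \<and> S = zspan p m bs)"

definition sympl :: "nat \<Rightarrow> nat \<Rightarrow> nat list \<Rightarrow> nat list \<Rightarrow> int" where
  "sympl p n x y = (\<Sum>i<n. int (x ! i) * int (y ! (n + i)) - int (y ! i) * int (x ! (n + i))) mod int p"

definition isotropic :: "nat \<Rightarrow> nat \<Rightarrow> nat list set \<Rightarrow> bool" where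
  "isotropic p n S \<longleftrightarrow> zsubspace p (2 * n) S \<and> (\<forall>x\<in>S. \<forall>y\<in>S. sympl p n x y = 0)"

definition sympl_perp :: "nat \<Rightarrow> nat \<Rightarrow> nat list set \<Rightarrow> nat list set" where
  "sympl_perp p n S = {x \<in> zvecs p (2 * n). \<forall>s\<in>S. sympl p n x s = 0}"

type_synonym op = "nat \<Rightarrow> nat \<Rightarrow> complex"

definition omega :: "nat \<Rightarrow> complex" where
  "omega p = cis (2 * pi / real p)"

definition omega_pow :: "nat \<Rightarrow> int \<Rightarrow> complex" where
  "omega_pow p e = omega p ^ nat (e mod int p)"

text \<open>The inverse of 2 in Z_p (p odd).\<close>
definition inv2 :: "nat \<Rightarrow> nat" where
  "inv2 p = (p + 1) div 2"

definition mmul :: "nat \<Rightarrow> op \<Rightarrow> op \<Rightarrow> op" where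
  "mmul p A B = (\<lambda>a b. \<Sum>c<p. A a c * B c b)"

definition idop :: op where
  "idop = (\<lambda>a b. if a = b then 1 else 0)"

fun mpow :: "nat \<Rightarrow> op \<Rightarrow> nat \<Rightarrow> op" where
  "mpow p A 0 = idop"
| "mpow p A (Suc k) = mmul p A (mpow p A k)"

definition adj :: "op \<Rightarrow> op" where
  "adj A = (\<lambda>a b. cnj (A b a))"

definition mtrace :: "nat \<Rightarrow> op \<Rightarrow> complex" where
  "mtrace p A = (\<Sum>a<p. A a a)"

definition Xop :: "nat \<Rightarrow> op" where
  "Xop p = (\<lambda>a b. if a = (b + 1) mod p then 1 else 0)"

definition Zop :: "nat \<Rightarrow> op" where
  "Zop p = (\<lambda>a b. if a = b then omega p ^ a else 0)"

definition Dop :: "nat \<Rightarrow> nat \<Rightarrow> nat \<Rightarrow> op" where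
  "Dop p u v = (\<lambda>a b. omega_pow p (- int (inv2 p * u * v)) *
                       mmul p (mpow p (Xop p) u) (mpow p (Zop p) v) a b)"

definition A00 :: "nat \<Rightarrow> op" where
  "A00 p = (\<lambda>a b. (1 / of_nat p) * (\<Sum>u<p. \<Sum>v<p. Dop p u v a b))"

definition Aop :: "nat \<Rightarrow> nat \<Rightarrow> nat \<Rightarrow> op" where
  "Aop p u v = mmul p (mmul p (Dop p u v) (A00 p)) (adj (Dop p u v))"

definition wigner :: "nat \<Rightarrow> op \<Rightarrow> nat \<Rightarrow> nat \<Rightarrow> complex" where
  "wigner p \<rho> u v = (1 / of_nat p) * mtrace p (mmul p \<rho> (Aop p u v))"

definition density :: "nat \<Rightarrow> op \<Rightarrow> bool" where
  "density p \<rho> \<longleftrightarrow> (\<forall>a<p. \<forall>b<p. \<rho> a b = cnj (\<rho> b a)) \<and>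
     (\<forall>x :: nat \<Rightarrow> complex. 0 \<le> Re (\<Sum>a<p. \<Sum>b<p. cnj (x a) * \<rho> a b * x b)) \<and>
     mtrace p \<rho> = 1"

section \<open>n-qudit operators on (C^p)^{tensor n}, indexed by basis lists in zvecs p n\<close>

type_synonym nop = "nat list \<Rightarrow> nat list \<Rightarrow> complex"

definition Dn :: "nat \<Rightarrow> nat \<Rightarrow> nat list \<Rightarrow> nop" where
  "Dn p n \<chi> = (\<lambda>a b. \<Prod>i<n. Dop p (\<chi> ! i) (\<chi> ! (n + i)) (a ! i) (b ! i))"

definition tensor_power :: "nat \<Rightarrow> op \<Rightarrow> nop" where
  "tensor_power n \<rho> = (\<lambda>a b. \<Prod>i<n. \<rho> (a ! i) (b ! i))"

definition proj0 :: "nat \<Rightarrow> nat \<Rightarrow> nat \<Rightarrow> nat list set \<Rightarrow> nop" where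
  "proj0 p n k S = (\<lambda>a b. (1 / of_nat p ^ (n - k)) * (\<Sum>\<chi>\<in>S. Dn p n \<chi> a b))"

definition nmul :: "nat \<Rightarrow> nat \<Rightarrow> nop \<Rightarrow> nop \<Rightarrow> nop" where
  "nmul p n A B = (\<lambda>a b. \<Sum>c\<in>zvecs p n. A a c * B c b)"

definition ntrace :: "nat \<Rightarrow> nat \<Rightarrow> nop \<Rightarrow> complex" where
  "ntrace p n A = (\<Sum>a\<in>zvecs p n. A a a)"

definition weight_enum :: "nat \<Rightarrow> nat list set \<Rightarrow> (nat \<Rightarrow> nat \<Rightarrow> complex) \<Rightarrow> complex" where
  "weight_enum n T y = (\<Sum>\<chi>\<in>T. \<Prod>i<n. y (\<chi> ! i) (\<chi> ! (n + i)))"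

end

theory Submission
  imports Defs "HOL-Library.Real_Mod" "HOL-Library.FuncSet"
begin


definition ee :: "nat \<Rightarrow> int \<Rightarrow> complex" where
  "ee p t = cis (2 * pi * of_int t / of_nat p)"

lemma ee_add: "ee p (a + b) = ee p a * ee p b"
  by (simp add: ee_def cis_mult add_divide_distrib distrib_left)

lemma ee_diff: "ee p (a - b) = ee p a * ee p (- b)"
  using ee_add[of p a "-b"] by simp

lemma ee_0[simp]: "ee p 0 = 1" by (simp add: ee_def)

lemma ee_pmult: "p > 0 \<Longrightarrow> ee p (int p * k) = 1"
proof -
  assume "p > 0"
  then have "2 * pi * of_int (int p * k) / of_nat p = 2 * pi * of_int k" by simp
  then show ?thesis by (simp add: ee_def)
qed

lemma ee_mod: "p > 0 \<Longrightarrow> ee p (t mod int p) = ee p t"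
proof -
  assume p: "p > 0"
  have "t = t mod int p + int p * (t div int p)" by simp
  then have "ee p t = ee p (t mod int p) * ee p (int p * (t div int p))"
    by (metis ee_add)
  with ee_pmult[OF p] show ?thesis by simp
qed

lemma ee_cong: "p > 0 \<Longrightarrow> a mod int p = b mod int p \<Longrightarrow> ee p a = ee p b"
  by (metis ee_mod)

lemma omega_power: "omega p ^ m = ee p (int m)"
  by (simp add: omega_def ee_def DeMoivre mult_ac)

lemma omega_pow_ee: "p > 0 \<Longrightarrow> omega_pow p t = ee p t"
  by (simp add: omega_pow_def omega_power ee_mod)

lemma ee_cnj: "cnj (ee p t) = ee p (- t)"
  by (simp add: ee_def cis_cnj)

lemma ee_power: "ee p t ^ m = ee p (int m * t)"
  by (simp add: ee_def DeMoivre mult_ac)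

lemma ee_1_iff: "p > 0 \<Longrightarrow> ee p t = 1 \<longleftrightarrow> int p dvd t"
proof
  assume p: "p > 0" and h: "ee p t = 1"
  then obtain n where "2 * pi * of_int t / of_nat p = of_int n * (2 * pi)"
    unfolding ee_def cis_eq_1_iff by blast
  then have "of_int t = of_int n * (of_nat p :: real)" using p by (simp add: field_simps)
  then have "t = n * int p" by (metis of_int_eq_iff of_int_mult of_int_of_nat_eq)
  then show "int p dvd t" by simp
next
  assume p: "p > 0" and "int p dvd t"
  then obtain k where "t = int p * k" by blast
  then show "ee p t = 1" using ee_pmult[OF p] by simp
qed

lemma ee_geom: "p > 0 \<Longrightarrow> (\<Sum>u<p. ee p (int u * c)) = (if int p dvd c then of_nat p else 0)"
proof -
  assume p: "p > 0"
  have "(\<Sum>u<p. ee p (int u * c)) = (\<Sum>u<p. ee p c ^ u)" by (simp add: ee_power)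
  also have "\<dots> = (if int p dvd c then of_nat p else 0)"
  proof (cases "int p dvd c")
    case True
    then show ?thesis using p ee_1_iff[OF p, of c] by simp
  next
    case False
    then have "ee p c \<noteq> 1" using ee_1_iff[OF p] by simp
    moreover have "ee p c ^ p = 1" using ee_power[of p c p] ee_pmult[OF p] by simp
    ultimately show ?thesis using False by (simp add: sum_gp_strict)
  qed
  finally show ?thesis .
qed



lemma mpowX: "b < p \<Longrightarrow> mpow p (Xop p) u a b = (if a = (b + u) mod p then 1 else 0)"
proof (induction u arbitrary: a)
  case 0
  then show ?case by (simp add: idop_def)
next
  case (Suc k)
  have "mpow p (Xop p) (Suc k) a b = (\<Sum>c<p. Xop p a c * (if c = (b + k) mod p then 1 else 0))"
    using Suc by (simp add: mmul_def)
  also have "\<dots> = Xop p a ((b + k) mod p)"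
    using Suc.prems by (simp add: sum.delta' if_distrib cong: if_cong)
  also have "\<dots> = (if a = (b + Suc k) mod p then 1 else 0)"
    by (simp add: Xop_def mod_Suc_eq)
  finally show ?case .
qed

lemma mpowZ: "a < p \<Longrightarrow> mpow p (Zop p) v a b = (if a = b then ee p (int a * int v) else 0)"
proof (induction v arbitrary: b)
  case 0
  then show ?case by (simp add: idop_def)
next
  case (Suc k)
  have "mpow p (Zop p) (Suc k) a b = (\<Sum>c<p. Zop p a c * mpow p (Zop p) k c b)"
    by (simp add: mmul_def)
  also have "\<dots> = Zop p a a * mpow p (Zop p) k a b"
    by (rule sum.mono_neutral_right[of "{..<p}" "{a}", simplified]) (use Suc.prems in \<open>auto simp: Zop_def\<close>)
  also have "\<dots> = (if a = b then ee p (int a * int (Suc k)) else 0)"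
    using Suc by (simp add: Zop_def omega_power ee_add[symmetric] algebra_simps)
  finally show ?case .
qed

lemma Dop_eq: "p > 0 \<Longrightarrow> b < p \<Longrightarrow> Dop p u v a b =
   (if a = (b + u) mod p then ee p (int v * int b - int (inv2 p * u * v)) else 0)"
proof -
  assume p: "p > 0" and b: "b < p"
  have "mmul p (mpow p (Xop p) u) (mpow p (Zop p) v) a b
        = (\<Sum>c<p. mpow p (Xop p) u a c * mpow p (Zop p) v c b)" by (simp add: mmul_def)
  also have "\<dots> = mpow p (Xop p) u a b * mpow p (Zop p) v b b"
    by (rule sum.mono_neutral_right[of "{..<p}" "{b}", simplified]) (use b in \<open>auto simp: mpowZ\<close>)
  also have "\<dots> = (if a = (b + u) mod p then ee p (int b * int v) else 0)"
    using b by (simp add: mpowX mpowZ)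
  finally show ?thesis using p
    by (simp add: Dop_def omega_pow_ee ee_diff mult.commute)
qed



lemma eq_mod_dvd: "(a::nat) < p \<Longrightarrow> (a = b mod p) \<longleftrightarrow> int p dvd (int a - int b)"
proof -
  assume a: "a < p"
  have "(a = b mod p) \<longleftrightarrow> a mod p = b mod p" using a by simp
  also have "\<dots> \<longleftrightarrow> int a mod int p = int b mod int p"
    by (metis of_nat_eq_iff of_nat_mod)
  also have "\<dots> \<longleftrightarrow> int p dvd (int a - int b)" by (rule mod_eq_dvd_iff)
  finally show ?thesis .
qed

lemma mod_inv: "(y::nat) < p \<Longrightarrow> z < p \<Longrightarrow> (z = (y + u) mod p) \<longleftrightarrow> (y = (z + (p - u mod p)) mod p)"
proof -
  assume y: "y < p" and z: "z < p"
  have p: "p > 0" using y by simp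
  have um: "u mod p < p" using p by simp
  have "(z = (y + u) mod p) \<longleftrightarrow> int p dvd (int z - int y - int u)"
    using eq_mod_dvd[OF z] by (simp add: algebra_simps)
  also have "\<dots> \<longleftrightarrow> int p dvd (int y - (int z + int p - int u))"
  proof -
    have "int y - (int z + int p - int u) = - (int z - int y - int u) - int p" by simp
    then show ?thesis by (metis dvd_diff_right_iff dvd_minus_iff dvd_refl add.commute diff_add_cancel dvd_add_left_iff)
  qed
  also have "\<dots> \<longleftrightarrow> int p dvd (int y - (int z + int p - int (u mod p)))"
  proof -
    have "int u = int (u mod p) + int p * int (u div p)" by (metis of_nat_add of_nat_mult mod_mult_div_eq add.commute)
    then have "int y - (int z + int p - int u) = int y - (int z + int p - int (u mod p)) + int p * int (u div p)" by simp
    then show ?thesis by (metis dvd_add_left_iff dvd_triv_left)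
  qed
  also have "\<dots> \<longleftrightarrow> (y = (z + (p - u mod p)) mod p)"
    using eq_mod_dvd[OF y, of "z + (p - u mod p)"] um by (simp add: of_nat_diff)
  finally show ?thesis .
qed


lemma ee_shift: "p > 0 \<Longrightarrow> a = b + int p * k \<Longrightarrow> ee p a = ee p b"
  by (simp add: ee_add ee_pmult)

lemma prod1: "p > 0 \<Longrightarrow> y < p \<Longrightarrow> mmul p (Dop p u v) (Dop p a b) x y
   = Dop p u v x ((y + a) mod p) * ee p (int b * int y - int (inv2 p * a * b))"
proof -
  assume p: "p > 0" and y: "y < p"
  have "mmul p (Dop p u v) (Dop p a b) x y = (\<Sum>c<p. Dop p u v x c * Dop p a b c y)"
    by (simp add: mmul_def)
  also have "\<dots> = Dop p u v x ((y + a) mod p) * Dop p a b ((y + a) mod p) y"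
    by (rule sum.mono_neutral_right[of "{..<p}" "{(y + a) mod p}", simplified])
       (use p y in \<open>auto simp: Dop_eq\<close>)
  also have "\<dots> = Dop p u v x ((y + a) mod p) * ee p (int b * int y - int (inv2 p * a * b))"
    using p y by (simp add: Dop_eq)
  finally show ?thesis .
qed

lemma comm: "p > 0 \<Longrightarrow> z < p \<Longrightarrow>
  mmul p (mmul p (Dop p u v) (Dop p a b)) (adj (Dop p u v)) x z
   = ee p (int v * int a - int u * int b) * Dop p a b x z"
proof -
  assume p: "p > 0" and z: "z < p"
  define y0 where "y0 = (z + (p - u mod p)) mod p"
  have y0: "y0 < p" using p by (simp add: y0_def)
  have zy0: "z = (y0 + u) mod p" using mod_inv[OF y0 z, of u] by (simp add: y0_def)
  define h where "h = int (inv2 p * u * v)"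
  define g where "g = int (inv2 p * a * b)"
  have "mmul p (mmul p (Dop p u v) (Dop p a b)) (adj (Dop p u v)) x z
     = (\<Sum>y<p. mmul p (Dop p u v) (Dop p a b) x y * cnj (Dop p u v z y))"
    by (simp add: mmul_def adj_def)
  also have "\<dots> = mmul p (Dop p u v) (Dop p a b) x y0 * cnj (Dop p u v z y0)"
  proof (rule sum.mono_neutral_right[of "{..<p}" "{y0}", simplified])
    show "y0 < p" by (rule y0)
    show "\<forall>i\<in>{..<p} - {y0}. mmul p (Dop p u v) (Dop p a b) x i * cnj (Dop p u v z i) = 0"
    proof
      fix i assume i: "i \<in> {..<p} - {y0}"
      then have "z \<noteq> (i + u) mod p" using mod_inv[of i p z u] z by (auto simp: y0_def)
      then show "mmul p (Dop p u v) (Dop p a b) x i * cnj (Dop p u v z i) = 0"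
        using i p by (simp add: Dop_eq)
    qed
  qed
  also have "\<dots> = (if x = ((y0 + a) mod p + u) mod p then ee p (int v * int ((y0 + a) mod p) - h) else 0)
       * ee p (int b * int y0 - g) * ee p (- (int v * int y0 - h))"
    using p y0 zy0 by (simp add: prod1 Dop_eq ee_cnj h_def g_def)
  also have "\<dots> = ee p (int v * int a - int u * int b) * Dop p a b x z"
  proof -
    have c: "((y0 + a) mod p + u) mod p = (z + a) mod p"
      using zy0 by (simp add: mod_simps add_ac)
    have w: "int ((y0 + a) mod p) = int y0 + int a - int p * int ((y0 + a) div p)"
      by (metis add_diff_cancel_right' mod_mult_div_eq of_nat_add of_nat_mult)
    have zz: "int z = int y0 + int u - int p * int ((y0 + u) div p)"
      using zy0 by (metis add_diff_cancel_right' mod_mult_div_eq of_nat_add of_nat_mult)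
    have e: "ee p (int v * int ((y0 + a) mod p) - h) * ee p (int b * int y0 - g) * ee p (- (int v * int y0 - h))
       = ee p (int v * int a - int u * int b) * ee p (int b * int z - g)"
    proof -
      have "ee p (int v * int ((y0 + a) mod p) - h) * ee p (int b * int y0 - g) * ee p (- (int v * int y0 - h))
          = ee p ((int v * int ((y0 + a) mod p) - h) + (int b * int y0 - g) + (- (int v * int y0 - h)))"
        by (simp only: ee_add)
      also have "\<dots> = ee p ((int v * int a - int u * int b) + (int b * int z - g))"
        apply (rule ee_shift[OF p, where k = "int b * int ((y0 + u) div p) - int v * int ((y0 + a) div p)"])
        unfolding w zz by (simp add: algebra_simps)
      also have "\<dots> = ee p (int v * int a - int u * int b) * ee p (int b * int z - g)"
        by (simp only: ee_add)
      finally show ?thesis .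
    qed
    show ?thesis using c e p z by (simp add: Dop_eq g_def)
  qed
  finally show ?thesis .
qed



lemma rot3: "(\<Sum>x\<in>A. \<Sum>y\<in>B. \<Sum>z\<in>C. f x y z) = (\<Sum>y\<in>B. \<Sum>z\<in>C. \<Sum>x\<in>A. f x y z)"
  by (subst sum.swap) (rule sum.cong[OF refl], rule sum.swap)

lemma swap4: "(\<Sum>y\<in>A. \<Sum>c\<in>B. \<Sum>a\<in>C. \<Sum>b\<in>D. F y c a b) = (\<Sum>a\<in>C. \<Sum>b\<in>D. \<Sum>y\<in>A. \<Sum>c\<in>B. F y c a b)"
proof -
  have "(\<Sum>y\<in>A. \<Sum>c\<in>B. \<Sum>a\<in>C. \<Sum>b\<in>D. F y c a b) = (\<Sum>y\<in>A. \<Sum>a\<in>C. \<Sum>b\<in>D. \<Sum>c\<in>B. F y c a b)"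
    by (rule sum.cong[OF refl], rule rot3)
  also have "\<dots> = (\<Sum>a\<in>C. \<Sum>b\<in>D. \<Sum>y\<in>A. \<Sum>c\<in>B. F y c a b)"
    by (rule rot3)
  finally show ?thesis .
qed

lemma Aop_eq: "p > 0 \<Longrightarrow> z < p \<Longrightarrow> Aop p u v x z
   = (1 / of_nat p) * (\<Sum>a<p. \<Sum>b<p. ee p (int v * int a - int u * int b) * Dop p a b x z)"
proof -
  assume p: "p > 0" and z: "z < p"
  have "Aop p u v x z = (\<Sum>y<p. \<Sum>c<p. \<Sum>a<p. \<Sum>b<p. (1 / of_nat p) * (Dop p u v x c * Dop p a b c y * cnj (Dop p u v z y)))"
    by (simp add: Aop_def mmul_def A00_def adj_def sum_distrib_left sum_distrib_right mult_ac)
  also have "\<dots> = (\<Sum>a<p. \<Sum>b<p. \<Sum>y<p. \<Sum>c<p. (1 / of_nat p) * (Dop p u v x c * Dop p a b c y * cnj (Dop p u v z y)))"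
    by (rule swap4)
  also have "\<dots> = (1 / of_nat p) * (\<Sum>a<p. \<Sum>b<p. \<Sum>y<p. (\<Sum>c<p. Dop p u v x c * Dop p a b c y) * cnj (Dop p u v z y))"
    by (simp add: sum_distrib_left sum_distrib_right mult_ac)
  also have "\<dots> = (1 / of_nat p) * (\<Sum>a<p. \<Sum>b<p. ee p (int v * int a - int u * int b) * Dop p a b x z)"
    using comm[OF p z] by (simp add: mmul_def adj_def)
  finally show ?thesis .
qed

definition TT :: "nat \<Rightarrow> op \<Rightarrow> nat \<Rightarrow> nat \<Rightarrow> complex" where
  "TT p \<rho> a b = (\<Sum>x<p. \<Sum>c<p. \<rho> x c * Dop p a b c x)"

lemma wigner_eq: "p > 0 \<Longrightarrow> wigner p \<rho> u v
   = (1 / of_nat p ^ 2) * (\<Sum>a<p. \<Sum>b<p. ee p (int v * int a - int u * int b) * TT p \<rho> a b)"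
proof -
  assume p: "p > 0"
  have "wigner p \<rho> u v = (1 / of_nat p) * (\<Sum>x<p. \<Sum>c<p. \<rho> x c * Aop p u v c x)"
    by (simp add: wigner_def mtrace_def mmul_def)
  also have "\<dots> = (\<Sum>x<p. \<Sum>c<p. \<Sum>a<p. \<Sum>b<p. (1 / of_nat p ^ 2) * (ee p (int v * int a - int u * int b) * (\<rho> x c * Dop p a b c x)))"
    using p by (simp add: Aop_eq sum_distrib_left sum_distrib_right mult_ac power2_eq_square)
  also have "\<dots> = (\<Sum>a<p. \<Sum>b<p. \<Sum>x<p. \<Sum>c<p. (1 / of_nat p ^ 2) * (ee p (int v * int a - int u * int b) * (\<rho> x c * Dop p a b c x)))"
    by (rule swap4)
  also have "\<dots> = (1 / of_nat p ^ 2) * (\<Sum>a<p. \<Sum>b<p. ee p (int v * int a - int u * int b) * TT p \<rho> a b)"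
    by (simp add: TT_def sum_distrib_left sum_distrib_right mult_ac)
  finally show ?thesis .
qed

lemma dvd_small: "(a::nat) < p \<Longrightarrow> b < p \<Longrightarrow> int p dvd (int a - int b) \<longleftrightarrow> a = b"
  using eq_mod_dvd[of a p b] by simp

lemma geom2: "p > 0 \<Longrightarrow> a < p \<Longrightarrow> b < p \<Longrightarrow>
   (\<Sum>u<p. ee p (int u * (int a - int b))) = (if a = b then of_nat p else 0)"
  by (simp add: ee_geom dvd_small)

lemma fourier: "p > 0 \<Longrightarrow> a0 < p \<Longrightarrow> b0 < p \<Longrightarrow>
  (\<Sum>u<p. \<Sum>v<p. ee p (int u * int b0 - int a0 * int v) * wigner p \<rho> u v) = TT p \<rho> a0 b0"
proof -
  assume p: "p > 0" and a0: "a0 < p" and b0: "b0 < p"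
  have eeq: "ee p (int u * int b0 - int a0 * int v) * ee p (int v * int a - int u * int b)
     = ee p (int u * (int b0 - int b)) * ee p (int v * (int a - int a0))" for u v a b
  proof -
    have "ee p (int u * int b0 - int a0 * int v) * ee p (int v * int a - int u * int b)
        = ee p ((int u * int b0 - int a0 * int v) + (int v * int a - int u * int b))" by (simp only: ee_add)
    also have "\<dots> = ee p (int u * (int b0 - int b) + int v * (int a - int a0))"
      by (simp add: algebra_simps)
    also have "\<dots> = ee p (int u * (int b0 - int b)) * ee p (int v * (int a - int a0))" by (simp only: ee_add)
    finally show ?thesis .
  qed
  have "(\<Sum>u<p. \<Sum>v<p. ee p (int u * int b0 - int a0 * int v) * wigner p \<rho> u v)
     = (\<Sum>u<p. \<Sum>v<p. \<Sum>a<p. \<Sum>b<p. (1 / of_nat p ^ 2) * TT p \<rho> a b *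
          (ee p (int u * int b0 - int a0 * int v) * ee p (int v * int a - int u * int b)))"
    using p by (simp add: wigner_eq sum_distrib_left sum_distrib_right mult_ac)
  also have "\<dots> = (\<Sum>u<p. \<Sum>v<p. \<Sum>a<p. \<Sum>b<p. (1 / of_nat p ^ 2) * TT p \<rho> a b *
          (ee p (int u * (int b0 - int b)) * ee p (int v * (int a - int a0))))"
    by (simp only: eeq)
  also have "\<dots> = (\<Sum>a<p. \<Sum>b<p. \<Sum>u<p. \<Sum>v<p. (1 / of_nat p ^ 2) * TT p \<rho> a b *
          (ee p (int u * (int b0 - int b)) * ee p (int v * (int a - int a0))))"
    by (rule swap4)
  also have "\<dots> = (\<Sum>a<p. \<Sum>b<p. (1 / of_nat p ^ 2) * TT p \<rho> a b *
          ((\<Sum>u<p. ee p (int u * (int b0 - int b))) * (\<Sum>v<p. ee p (int v * (int a - int a0)))))"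
    by (simp add: sum_distrib_left sum_distrib_right mult_ac)
  also have "\<dots> = (\<Sum>a<p. \<Sum>b<p. (1 / of_nat p ^ 2) * TT p \<rho> a b *
          ((if b0 = b then of_nat p else 0) * (if a = a0 then of_nat p else 0)))"
    using a0 b0 p by (intro sum.cong refl) (simp add: geom2)
  also have "\<dots> = (\<Sum>a<p. \<Sum>b<p. if a = a0 then (if b = b0 then TT p \<rho> a b else 0) else 0)"
    using p by (intro sum.cong refl) (auto simp: power2_eq_square)
  also have "\<dots> = (\<Sum>a<p. if a = a0 then (\<Sum>b<p. if b = b0 then TT p \<rho> a b else 0) else 0)"
    by (rule sum.cong) auto
  also have "\<dots> = TT p \<rho> a0 b0"
    using a0 b0 by simp
  finally show ?thesis .
qed



lemma finite_zvecs: "finite (zvecs p n)"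
proof -
  have "zvecs p n = {xs. set xs \<subseteq> {..<p} \<and> length xs = n}" by (auto simp: zvecs_def)
  then show ?thesis by (simp add: finite_lists_length_eq)
qed

lemma zvecs_Suc: "zvecs p (Suc n) = (\<lambda>(a, t). a @ [t]) ` (zvecs p n \<times> {..<p})"
proof
  show "zvecs p (Suc n) \<subseteq> (\<lambda>(a, t). a @ [t]) ` (zvecs p n \<times> {..<p})"
  proof
    fix x assume x: "x \<in> zvecs p (Suc n)"
    then have "x \<noteq> []" by (auto simp: zvecs_def)
    then have "x = butlast x @ [last x]" by simp
    moreover have "butlast x \<in> zvecs p n" "last x < p" using x \<open>x \<noteq> []\<close>
      by (auto simp: zvecs_def dest: in_set_butlastD) (metis last_in_set subsetD lessThan_iff)
    ultimately show "x \<in> (\<lambda>(a, t). a @ [t]) ` (zvecs p n \<times> {..<p})"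
      by (intro image_eqI[where x="(butlast x, last x)"]) simp_all
  qed
  show "(\<lambda>(a, t). a @ [t]) ` (zvecs p n \<times> {..<p}) \<subseteq> zvecs p (Suc n)"
    by (auto simp: zvecs_def)
qed

lemma factor: "(\<Sum>a\<in>zvecs p n. \<Prod>i<n. f i (a ! i)) = (\<Prod>i<n. \<Sum>t<p. (f i t :: complex))"
proof (induction n)
  case 0
  have "zvecs p 0 = {[]}" by (auto simp: zvecs_def)
  then show ?case by simp
next
  case (Suc n)
  have inj: "inj_on (\<lambda>(a, t). a @ [t]) (zvecs p n \<times> {..<p})"
    by (rule inj_onI) clarsimp
  have "(\<Sum>b\<in>zvecs p (Suc n). \<Prod>i<Suc n. f i (b ! i))
      = (\<Sum>(a, t)\<in>zvecs p n \<times> {..<p}. \<Prod>i<Suc n. f i ((a @ [t]) ! i))"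
    unfolding zvecs_Suc by (subst sum.reindex[OF inj]) (simp add: case_prod_unfold)
  also have "\<dots> = (\<Sum>(a, t)\<in>zvecs p n \<times> {..<p}. (\<Prod>i<n. f i (a ! i)) * f n t)"
  proof (rule sum.cong[OF refl], clarify)
    fix a t assume a: "a \<in> zvecs p n"
    then have la: "length a = n" by (simp add: zvecs_def)
    have "(\<Prod>i<Suc n. f i ((a @ [t]) ! i)) = (\<Prod>i<n. f i ((a @ [t]) ! i)) * f n ((a @ [t]) ! n)"
      by simp
    also have "\<dots> = (\<Prod>i<n. f i (a ! i)) * f n t"
      using la by (simp add: nth_append)
    finally show "(\<Prod>i<Suc n. f i ((a @ [t]) ! i)) = (\<Prod>i<n. f i (a ! i)) * f n t" .
  qed
  also have "\<dots> = (\<Sum>a\<in>zvecs p n. \<Prod>i<n. f i (a ! i)) * (\<Sum>t<p. f n t)"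
    by (simp add: sum_product sum.cartesian_product)
  also have "\<dots> = (\<Prod>i<Suc n. \<Sum>t<p. f i t)"
    using Suc by simp
  finally show ?case .
qed

lemma factor2: "(\<Sum>u\<in>zvecs p n. \<Sum>v\<in>zvecs p n. \<Prod>i<n. h i (u ! i) (v ! i))
   = (\<Prod>i<n. \<Sum>a<p. \<Sum>b<p. (h i a b :: complex))"
proof -
  have "(\<Sum>u\<in>zvecs p n. \<Sum>v\<in>zvecs p n. \<Prod>i<n. h i (u ! i) (v ! i))
      = (\<Sum>u\<in>zvecs p n. \<Prod>i<n. \<Sum>b<p. h i (u ! i) b)"
    by (rule sum.cong[OF refl]) (rule factor)
  also have "\<dots> = (\<Prod>i<n. \<Sum>a<p. \<Sum>b<p. h i a b)"
    by (rule factor)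
  finally show ?thesis .
qed

lemma zvecs_append: "zvecs p (2 * n) = (\<lambda>(u, v). u @ v) ` (zvecs p n \<times> zvecs p n)"
proof
  show "zvecs p (2 * n) \<subseteq> (\<lambda>(u, v). u @ v) ` (zvecs p n \<times> zvecs p n)"
  proof
    fix x assume x: "x \<in> zvecs p (2 * n)"
    have "x = take n x @ drop n x" by simp
    moreover have "take n x \<in> zvecs p n" "drop n x \<in> zvecs p n" using x
      by (auto simp: zvecs_def dest: in_set_takeD in_set_dropD)
    ultimately show "x \<in> (\<lambda>(u, v). u @ v) ` (zvecs p n \<times> zvecs p n)"
      by (intro image_eqI[where x="(take n x, drop n x)"]) simp_all
  qed
  show "(\<lambda>(u, v). u @ v) ` (zvecs p n \<times> zvecs p n) \<subseteq> zvecs p (2 * n)"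
    by (auto simp: zvecs_def)
qed

lemma sum_append: "(\<Sum>x\<in>zvecs p (2 * n). F x) = (\<Sum>u\<in>zvecs p n. \<Sum>v\<in>zvecs p n. F (u @ v))"
proof -
  have inj: "inj_on (\<lambda>(u, v). u @ v) (zvecs p n \<times> zvecs p n)"
  proof (rule inj_onI)
    fix x y assume x: "x \<in> zvecs p n \<times> zvecs p n" and y: "y \<in> zvecs p n \<times> zvecs p n"
      and e: "(\<lambda>(u, v). u @ v) x = (\<lambda>(u, v). u @ v) y"
    obtain u v where xu: "x = (u, v)" by (cases x)
    obtain u' v' where yu: "y = (u', v')" by (cases y)
    have "length u = length u'" using x y xu yu by (simp add: zvecs_def)
    with e xu yu show "x = y" by simp
  qed
  show ?thesis
    unfolding zvecs_append by (subst sum.reindex[OF inj]) (simp add: sum.cartesian_product case_prod_unfold)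
qed



definition EE :: "nat \<Rightarrow> nat \<Rightarrow> nat list \<Rightarrow> nat list \<Rightarrow> complex" where
  "EE p n x s = (\<Prod>i<n. ee p (int (x ! i) * int (s ! (n + i)) - int (s ! i) * int (x ! (n + i))))"

lemma ee_sum: "ee p (\<Sum>i<(n::nat). f i) = (\<Prod>i<n. ee p (f i))"
  by (induction n) (simp_all add: ee_add)

lemma ee_sympl: "p > 0 \<Longrightarrow> ee p (sympl p n x s) = EE p n x s"
  by (simp add: sympl_def ee_mod ee_sum EE_def)

lemma int_mod_exp: "int (m mod p) = int m - int p * int (m div p)"
  by (metis add_diff_cancel_right' mod_mult_div_eq of_nat_add of_nat_mult)

lemma ee_addmod: "p > 0 \<Longrightarrow> ee p (int x * int ((a + b) mod p) - int ((c + d) mod p) * int y)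
   = ee p (int x * int a - int c * int y) * ee p (int x * int b - int d * int y)"
proof -
  assume p: "p > 0"
  have "ee p (int x * int ((a + b) mod p) - int ((c + d) mod p) * int y)
      = ee p ((int x * int a - int c * int y) + (int x * int b - int d * int y))"
    apply (rule ee_shift[OF p, where k = "int ((c + d) div p) * int y - int x * int ((a + b) div p)"])
    unfolding int_mod_exp by (simp add: algebra_simps)
  also have "\<dots> = ee p (int x * int a - int c * int y) * ee p (int x * int b - int d * int y)"
    by (simp only: ee_add)
  finally show ?thesis .
qed

lemma EE_add: "p > 0 \<Longrightarrow> length s0 = 2 * n \<Longrightarrow> length s = 2 * n \<Longrightarrow>
  EE p n x (zadd p s0 s) = EE p n x s0 * EE p n x s"
  unfolding EE_def prod.distrib[symmetric]
  by (rule prod.cong[OF refl]) (simp add: zadd_def ee_addmod)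

lemma zvecs_nth: "x \<in> zvecs p m \<Longrightarrow> i < m \<Longrightarrow> x ! i < p"
  unfolding zvecs_def by (metis (mono_tags, lifting) lessThan_iff mem_Collect_eq nth_mem subsetD)

lemma add_mod_cancel: "(b::nat) < p \<Longrightarrow> b' < p \<Longrightarrow> (a + b) mod p = (a + b') mod p \<Longrightarrow> b = b'"
proof -
  assume b: "b < p" and b': "b' < p" and e: "(a + b) mod p = (a + b') mod p"
  have "int (a + b) mod int p = int (a + b') mod int p" using e by (metis of_nat_mod)
  then have "int p dvd (int (a + b) - int (a + b'))" by (simp add: mod_eq_dvd_iff)
  then have "int p dvd (int b - int b')" by simp
  then show ?thesis using dvd_small[OF b b'] by simp
qed

lemma zadd_inj: "length s0 = m \<Longrightarrow> inj_on (zadd p s0) (zvecs p m)"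
proof (rule inj_onI)
  fix s s' assume l: "length s0 = m" and s: "s \<in> zvecs p m" and s': "s' \<in> zvecs p m"
    and e: "zadd p s0 s = zadd p s0 s'"
  have ls: "length s = m" "length s' = m" using s s' by (auto simp: zvecs_def)
  show "s = s'"
  proof (rule nth_equalityI)
    show "length s = length s'" using ls by simp
    fix i assume i: "i < length s"
    have "zadd p s0 s ! i = zadd p s0 s' ! i" using e by simp
    then have "(s0 ! i + s ! i) mod p = (s0 ! i + s' ! i) mod p"
      using i ls l by (simp add: zadd_def)
    then show "s ! i = s' ! i"
      using add_mod_cancel zvecs_nth[OF s] zvecs_nth[OF s'] i ls by metis
  qed
qed

lemma char_sum:
  assumes p: "p > 0" and S: "zsubspace p (2 * n) S"
  shows "(\<Sum>s\<in>S. EE p n x s) = (if \<forall>s\<in>S. sympl p n x s = 0 then of_nat (card S) else 0)"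
proof -
  have SZ: "S \<subseteq> zvecs p (2 * n)" using S by (simp add: zsubspace_def)
  have fin: "finite S" using finite_subset[OF SZ finite_zvecs] .
  show ?thesis
  proof (cases "\<forall>s\<in>S. sympl p n x s = 0")
    case True
    have "(\<Sum>s\<in>S. EE p n x s) = (\<Sum>s\<in>S. 1)"
      by (rule sum.cong[OF refl]) (metis True ee_sympl[OF p] ee_0)
    then show ?thesis using True by simp
  next
    case False
    then obtain s0 where s0: "s0 \<in> S" and c: "sympl p n x s0 \<noteq> 0" by blast
    define c where "c = sympl p n x s0"
    have c0: "0 \<le> c" "c < int p" using p by (simp_all add: c_def sympl_def)
    have "\<not> int p dvd c"
    proof
      assume "int p dvd c"
      then have "c = 0" using c0 zdvd_imp_le[of "int p" c] by (cases "c = 0") auto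
      then show False using c by (simp add: c_def)
    qed
    then have ne: "EE p n x s0 \<noteq> 1" using ee_1_iff[OF p] ee_sympl[OF p] by (metis c_def)
    have ls0: "length s0 = 2 * n" using s0 SZ by (auto simp: zvecs_def)
    have inj: "inj_on (zadd p s0) S" using zadd_inj[OF ls0] SZ inj_on_subset by blast
    have img: "zadd p s0 ` S = S"
      by (rule endo_inj_surj[OF fin _ inj]) (use S s0 in \<open>auto simp: zsubspace_def\<close>)
    have "(\<Sum>s\<in>S. EE p n x s) = (\<Sum>s\<in>zadd p s0 ` S. EE p n x s)" using img by simp
    also have "\<dots> = (\<Sum>s\<in>S. EE p n x (zadd p s0 s))" by (simp add: sum.reindex[OF inj])
    also have "\<dots> = (\<Sum>s\<in>S. EE p n x s0 * EE p n x s)"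
      by (rule sum.cong[OF refl]) (use p ls0 SZ in \<open>auto intro!: EE_add simp: zvecs_def\<close>)
    also have "\<dots> = EE p n x s0 * (\<Sum>s\<in>S. EE p n x s)" by (simp add: sum_distrib_left)
    finally have "(1 - EE p n x s0) * (\<Sum>s\<in>S. EE p n x s) = 0" by (simp add: algebra_simps)
    then have "(\<Sum>s\<in>S. EE p n x s) = 0" using ne by simp
    then show ?thesis using False by (simp only: if_False)
  qed
qed



lemma zlincomb_nth: "i < m \<Longrightarrow> zlincomb p m c bs ! i = (\<Sum>j<length bs. c j * (bs ! j ! i)) mod p"
  by (simp add: zlincomb_def)

lemma zlincomb_cong: "(\<And>j. j < length bs \<Longrightarrow> c j = c' j) \<Longrightarrow> zlincomb p m c bs = zlincomb p m c' bs"
  unfolding zlincomb_def by (intro map_cong refl arg_cong2[where f="(mod)"] sum.cong) auto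

lemma card_dim:
  assumes p: "p > 0" and d: "zdim_eq p m S dd"
  shows "card S = p ^ dd"
proof -
  obtain bs where lb: "length bs = dd" and ind: "zlin_indep p m bs" and Sd: "S = zspan p m bs"
    using d by (auto simp: zdim_eq_def)
  define C where "C = PiE {..<dd} (\<lambda>_. {..<p})"
  have img: "S = (\<lambda>c. zlincomb p m c bs) ` C"
  proof
    show "S \<subseteq> (\<lambda>c. zlincomb p m c bs) ` C"
    proof
      fix x assume "x \<in> S"
      then obtain c where c: "\<forall>j<length bs. c j < p" and x: "x = zlincomb p m c bs"
        using Sd by (auto simp: zspan_def)
      have "restrict c {..<dd} \<in> C" using c lb by (auto simp: C_def)
      moreover have "x = zlincomb p m (restrict c {..<dd}) bs"
        using x lb by (auto intro: zlincomb_cong)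
      ultimately show "x \<in> (\<lambda>c. zlincomb p m c bs) ` C" by blast
    qed
    show "(\<lambda>c. zlincomb p m c bs) ` C \<subseteq> S"
      using lb by (auto simp: Sd zspan_def C_def PiE_def Pi_def)
  qed
  have inj: "inj_on (\<lambda>c. zlincomb p m c bs) C"
  proof (rule inj_onI)
    fix c c' assume c: "c \<in> C" and c': "c' \<in> C" and e: "zlincomb p m c bs = zlincomb p m c' bs"
    have cp: "\<And>j. j < dd \<Longrightarrow> c j < p" and cp': "\<And>j. j < dd \<Longrightarrow> c' j < p"
      using c c' by (auto simp: C_def PiE_def Pi_def)
    define e' where "e' j = (c j + p - c' j) mod p" for j
    have e'p: "\<forall>j<length bs. e' j < p" using p by (simp add: e'_def)
    have "zlincomb p m e' bs = replicate m 0"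
    proof (rule nth_equalityI)
      show "length (zlincomb p m e' bs) = length (replicate m 0)" by (simp add: zlincomb_def)
      fix i assume "i < length (zlincomb p m e' bs)"
      then have i: "i < m" by (simp add: zlincomb_def)
      define B where "B j = int (bs ! j ! i)" for j
      have "zlincomb p m c bs ! i = zlincomb p m c' bs ! i" using e by simp
      then have "(\<Sum>j<dd. c j * (bs ! j ! i)) mod p = (\<Sum>j<dd. c' j * (bs ! j ! i)) mod p"
        using i lb by (simp add: zlincomb_nth)
      then have "int (\<Sum>j<dd. c j * (bs ! j ! i)) mod int p = int (\<Sum>j<dd. c' j * (bs ! j ! i)) mod int p"
        by (metis of_nat_mod)
      then have d1: "int p dvd ((\<Sum>j<dd. int (c j) * B j) - (\<Sum>j<dd. int (c' j) * B j))"
        by (simp add: mod_eq_dvd_iff B_def)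
      have d2: "int p dvd (\<Sum>j<dd. (int (e' j) - (int (c j) - int (c' j))) * B j)"
      proof (rule dvd_sum)
        fix j assume j: "j \<in> {..<dd}"
        have "int (e' j) = int (c j) + int p - int (c' j) - int p * int ((c j + p - c' j) div p)"
          using cp'[of j] j unfolding e'_def int_mod_exp by (simp add: of_nat_diff)
        then have "int (e' j) - (int (c j) - int (c' j)) = int p * (1 - int ((c j + p - c' j) div p))"
          by (simp add: algebra_simps)
        then show "int p dvd (int (e' j) - (int (c j) - int (c' j))) * B j" by simp
      qed
      have "(\<Sum>j<dd. int (e' j) * B j) = (\<Sum>j<dd. (int (e' j) - (int (c j) - int (c' j))) * B j)
          + ((\<Sum>j<dd. int (c j) * B j) - (\<Sum>j<dd. int (c' j) * B j))"
        by (simp add: sum_subtractf[symmetric] sum.distrib[symmetric] algebra_simps)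
      then have "int p dvd (\<Sum>j<dd. int (e' j) * B j)" using d1 d2 by simp
      moreover have "int (\<Sum>j<dd. e' j * (bs ! j ! i)) = (\<Sum>j<dd. int (e' j) * B j)"
        by (simp add: B_def)
      ultimately have "int p dvd int (\<Sum>j<dd. e' j * (bs ! j ! i))" by simp
      then have "p dvd (\<Sum>j<dd. e' j * (bs ! j ! i))" by (simp only: int_dvd_int_iff)
      then have "(\<Sum>j<dd. e' j * (bs ! j ! i)) mod p = 0" by simp
      then show "zlincomb p m e' bs ! i = replicate m 0 ! i" using i lb by (simp add: zlincomb_nth)
    qed
    then have z: "\<forall>j<length bs. e' j = 0" using ind e'p by (simp add: zlin_indep_def)
    show "c = c'"
    proof (rule PiE_ext[OF c[unfolded C_def] c'[unfolded C_def]])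
      fix j assume j: "j \<in> {..<dd}"
      then have "(c j + p - c' j) mod p = 0" using z lb by (simp add: e'_def)
      then have "p dvd (c j + p - c' j)" by (simp add: dvd_eq_mod_eq_0)
      then have "int p dvd int (c j + p - c' j)" by (simp only: int_dvd_int_iff)
      moreover have "int (c j + p - c' j) = (int (c j) - int (c' j)) + int p"
        using cp'[of j] j by (simp add: of_nat_diff)
      ultimately have "int p dvd (int (c j) - int (c' j))"
        by (metis dvd_add_left_iff dvd_refl)
      then show "c j = c' j" using dvd_small cp cp' j by simp
    qed
  qed
  have "card S = card C" using img card_image[OF inj] by simp
  also have "\<dots> = p ^ dd" by (simp add: C_def card_PiE)
  finally show ?thesis .
qed



lemma lhs_eq:
  assumes p: "p > 0" and SZ: "S \<subseteq> zvecs p (2 * n)"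
  shows "ntrace p n (nmul p n (proj0 p n k S) (tensor_power n \<rho>))
     = (1 / of_nat p ^ (n - k)) * (\<Sum>\<chi>\<in>S. \<Prod>i<n. TT p \<rho> (\<chi> ! i) (\<chi> ! (n + i)))"
proof -
  have "ntrace p n (nmul p n (proj0 p n k S) (tensor_power n \<rho>))
     = (\<Sum>a\<in>zvecs p n. \<Sum>c\<in>zvecs p n. \<Sum>\<chi>\<in>S. (1 / of_nat p ^ (n - k)) *
          (\<Prod>i<n. Dop p (\<chi> ! i) (\<chi> ! (n + i)) (a ! i) (c ! i) * \<rho> (c ! i) (a ! i)))"
    by (simp add: ntrace_def nmul_def proj0_def tensor_power_def Dn_def sum_distrib_left
        sum_distrib_right prod.distrib mult_ac)
  also have "\<dots> = (\<Sum>\<chi>\<in>S. \<Sum>a\<in>zvecs p n. \<Sum>c\<in>zvecs p n. (1 / of_nat p ^ (n - k)) *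
          (\<Prod>i<n. Dop p (\<chi> ! i) (\<chi> ! (n + i)) (a ! i) (c ! i) * \<rho> (c ! i) (a ! i)))"
    by (rule trans[OF rot3 rot3])
  also have "\<dots> = (1 / of_nat p ^ (n - k)) * (\<Sum>\<chi>\<in>S. \<Sum>a\<in>zvecs p n. \<Sum>c\<in>zvecs p n.
          (\<Prod>i<n. Dop p (\<chi> ! i) (\<chi> ! (n + i)) (a ! i) (c ! i) * \<rho> (c ! i) (a ! i)))"
    by (simp add: sum_distrib_left)
  also have "\<dots> = (1 / of_nat p ^ (n - k)) * (\<Sum>\<chi>\<in>S. \<Prod>i<n. \<Sum>a<p. \<Sum>c<p.
          Dop p (\<chi> ! i) (\<chi> ! (n + i)) a c * \<rho> c a)"
  proof -
    have "(\<Sum>a\<in>zvecs p n. \<Sum>c\<in>zvecs p n.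
          (\<Prod>i<n. Dop p (\<chi> ! i) (\<chi> ! (n + i)) (a ! i) (c ! i) * \<rho> (c ! i) (a ! i)))
       = (\<Prod>i<n. \<Sum>a<p. \<Sum>c<p. Dop p (\<chi> ! i) (\<chi> ! (n + i)) a c * \<rho> c a)" for \<chi>
      by (rule factor2[where h = "\<lambda>i a c. Dop p (\<chi> ! i) (\<chi> ! (n + i)) a c * \<rho> c a"])
    then show ?thesis by simp
  qed
  also have "\<dots> = (1 / of_nat p ^ (n - k)) * (\<Sum>\<chi>\<in>S. \<Prod>i<n. TT p \<rho> (\<chi> ! i) (\<chi> ! (n + i)))"
    unfolding TT_def by (subst (2) sum.swap) (simp add: mult.commute)
  finally show ?thesis .
qed

lemma rhs_eq:
  assumes p: "p > 0" and S: "zsubspace p (2 * n) S"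
  shows "weight_enum n (sympl_perp p n S) (wigner p \<rho>)
     = (1 / of_nat (card S)) * (\<Sum>s\<in>S. \<Prod>i<n. TT p \<rho> (s ! i) (s ! (n + i)))"
proof -
  have SZ: "S \<subseteq> zvecs p (2 * n)" using S by (simp add: zsubspace_def)
  have fin: "finite S" using finite_subset[OF SZ finite_zvecs] .
  have "replicate (2 * n) 0 \<in> S" using S by (simp add: zsubspace_def)
  then have cS: "card S \<noteq> 0" using fin by auto
  define W where "W x = (\<Prod>i<n. wigner p \<rho> (x ! i) (x ! (n + i)))" for x
  have "weight_enum n (sympl_perp p n S) (wigner p \<rho>)
      = (\<Sum>x\<in>{x \<in> zvecs p (2 * n). \<forall>s\<in>S. sympl p n x s = 0}. W x)"
    by (simp add: weight_enum_def sympl_perp_def W_def)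
  also have "\<dots> = (\<Sum>x\<in>zvecs p (2 * n). if \<forall>s\<in>S. sympl p n x s = 0 then W x else 0)"
    by (rule sum.inter_filter[OF finite_zvecs])
  also have "\<dots> = (\<Sum>x\<in>zvecs p (2 * n). (1 / of_nat (card S)) * (\<Sum>s\<in>S. EE p n x s) * W x)"
    by (rule sum.cong[OF refl]) (simp add: char_sum[OF p S] cS)
  also have "\<dots> = (\<Sum>x\<in>zvecs p (2 * n). \<Sum>s\<in>S. (1 / of_nat (card S)) * (EE p n x s * W x))"
    by (simp add: sum_distrib_left sum_distrib_right mult_ac)
  also have "\<dots> = (\<Sum>s\<in>S. \<Sum>x\<in>zvecs p (2 * n). (1 / of_nat (card S)) * (EE p n x s * W x))"
    by (rule sum.swap)
  also have "\<dots> = (1 / of_nat (card S)) * (\<Sum>s\<in>S. \<Sum>x\<in>zvecs p (2 * n). EE p n x s * W x)"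
    by (simp add: sum_distrib_left)
  also have "\<dots> = (1 / of_nat (card S)) * (\<Sum>s\<in>S. \<Sum>u\<in>zvecs p n. \<Sum>v\<in>zvecs p n.
       \<Prod>i<n. ee p (int (u ! i) * int (s ! (n + i)) - int (s ! i) * int (v ! i)) * wigner p \<rho> (u ! i) (v ! i))"
  proof -
    have "EE p n (u @ v) s * W (u @ v) =
       (\<Prod>i<n. ee p (int (u ! i) * int (s ! (n + i)) - int (s ! i) * int (v ! i)) * wigner p \<rho> (u ! i) (v ! i))"
      if u: "u \<in> zvecs p n" for u v s
    proof -
      have lu: "length u = n" using u by (simp add: zvecs_def)
      show ?thesis unfolding EE_def W_def prod.distrib[symmetric]
        by (rule prod.cong[OF refl]) (simp add: nth_append lu)
    qed
    then show ?thesis by (simp add: sum_append)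
  qed
  also have "\<dots> = (1 / of_nat (card S)) * (\<Sum>s\<in>S. \<Prod>i<n. \<Sum>a<p. \<Sum>b<p.
       ee p (int a * int (s ! (n + i)) - int (s ! i) * int b) * wigner p \<rho> a b)"
  proof -
    have "(\<Sum>u\<in>zvecs p n. \<Sum>v\<in>zvecs p n.
       \<Prod>i<n. ee p (int (u ! i) * int (s ! (n + i)) - int (s ! i) * int (v ! i)) * wigner p \<rho> (u ! i) (v ! i))
      = (\<Prod>i<n. \<Sum>a<p. \<Sum>b<p.
       ee p (int a * int (s ! (n + i)) - int (s ! i) * int b) * wigner p \<rho> a b)" for s
      by (rule factor2[where h = "\<lambda>i a b. ee p (int a * int (s ! (n + i)) - int (s ! i) * int b) * wigner p \<rho> a b"])
    then show ?thesis by simp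
  qed
  also have "\<dots> = (1 / of_nat (card S)) * (\<Sum>s\<in>S. \<Prod>i<n. TT p \<rho> (s ! i) (s ! (n + i)))"
  proof -
    have "(\<Sum>a<p. \<Sum>b<p. ee p (int a * int (s ! (n + i)) - int (s ! i) * int b) * wigner p \<rho> a b)
        = TT p \<rho> (s ! i) (s ! (n + i))" if s: "s \<in> S" and i: "i < n" for s i
      by (rule fourier[OF p]) (use s i SZ zvecs_nth in auto)
    then have "(\<Sum>s\<in>S. \<Prod>i<n. \<Sum>a<p. \<Sum>b<p.
       ee p (int a * int (s ! (n + i)) - int (s ! i) * int b) * wigner p \<rho> a b)
       = (\<Sum>s\<in>S. \<Prod>i<n. TT p \<rho> (s ! i) (s ! (n + i)))"
      by (intro sum.cong prod.cong refl) auto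
    then show ?thesis by simp
  qed
  finally show ?thesis .
qed


theorem theorem1:
  fixes p n k :: nat and S :: "nat list set" and \<rho> :: op
  assumes "prime p" and "odd p"
    and "n \<ge> 1" and "k \<le> n"
    and "isotropic p n S" and "zdim_eq p (2 * n) S (n - k)"
    and "density p \<rho>"
  shows "ntrace p n (nmul p n (proj0 p n k S) (tensor_power n \<rho>))
           = weight_enum n (sympl_perp p n S) (wigner p \<rho>)"
proof -
  have p: "p > 0" using assms(1) prime_gt_0_nat by blast
  have S: "zsubspace p (2 * n) S" using assms(5) by (simp add: isotropic_def)
  have SZ: "S \<subseteq> zvecs p (2 * n)" using S by (simp add: zsubspace_def)
  have cS: "card S = p ^ (n - k)" by (rule card_dim[OF p assms(6)])
  show ?thesis
    unfolding lhs_eq[OF p SZ] rhs_eq[OF p S] cS by simp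
qed

end
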